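(* Consider the homogeneous two-fluid model in $\mathbb{R}^d$: unknowns are the volume fractions $\alpha^\pm\in[0,1]$ with $\alpha^++\alpha^-=1$, the phase densities $\rho^\pm>0$, a common velocity field $\vec{u}$, a common pressure $p$ and the mixture specific internal energy $e$, satisfying \begin{align*} (\alpha^+\rho^+)_t + \nabla\cdot(\alpha^+\rho^+\vec{u}) &= 0,\\ (\alpha^-\rho^-)_t + \nabla\cdot(\alpha^-\rho^-\vec{u}) &= 0,\\ (\rho\vec{u})_t + \nabla\cdot(\rho\vec{u}\otimes\vec{u} + p\,\mathbb{I}) &= \rho\vec{g},\\ (\rho E)_t + \nabla\cdot(\rho H\vec{u}) &= \rho\vec{g}\cdot\vec{u}, \end{align*} where $\vec g$ is a constant gravity vector, $\rho=\alpha^+\rho^++\alpha^-\rho^-$, $E=e+\tfrac12|\vec u|^2$, $H=E+p/\rho$, and the system is closed by the mixture equation of state described in the context. Let $\alpha=\alpha^+-\alpha^-$, and let $s$ be the mixture specific entropy defined by $2\rho s=(1+\alpha)\rho^+s^++(1-\alpha)\rho^-s^-$. Then continuous solutions of this system satisfy \begin{align*} \vec{u}_t + \vec{u}\cdot\nabla\vec{u} + \frac{1}{\rho}\nabla p &= \vec{g},\\ p_t + \vec{u}\cdot\nabla p + \rho c_s^2\,\nabla\cdot\vec{u} &= 0,\\ \alpha_t + \vec{u}\cdot\nabla\alpha + (1-\alpha^2)\,\delta\,\nabla\cdot\vec{u} &= 0,\\ s_t + \vec{u}\cdot\nabla s &= 0, \end{align*} where $c_s$ and $\delta$ are defined as follows: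 with $(c_s^\pm)^2=\dfrac{\gamma^\pm p+\pi^\pm}{\rho^\pm}$ and $$\rho a^2=\frac{(1+\alpha)\rho^+(c_s^+)^2}{2(\gamma^+-1)}+\frac{(1-\alpha)\rho^-(c_s^-)^2}{2(\gamma^--1)},$$ $c_s>0$ is given by $$\frac{1}{\rho c_s^2}=\frac{(1+\alpha)\gamma^+}{2\rho^+(c_s^+)^2}+\frac{(1-\alpha)\gamma^-}{2\rho^-(c_s^-)^2}-\frac{1}{\rho a^2},$$ and $$\delta=\frac12\,\frac{\rho c_s^2(\gamma^-\pi^+-\gamma^+\pi^-)}{\rho^+\rho^-(c_s^+)^2(c_s^-)^2}.$$
   Context: Each pure fluid (superscript $+$ for liquid, $-$ for gas) obeys a stiffened-gas equation of state with constants $\gamma^\pm>1$, $C_V^\pm>0$, $\pi^\pm\ge 0$: $p^\pm+\pi^\pm=(\gamma^\pm-1)\rho^\pm e^\pm$ and $e^\pm=C_V^\pm T^\pm+\dfrac{\pi^\pm}{\gamma^\pm\rho^\pm}$, where $e^\pm,T^\pm$ are the specific internal energy and temperature of phase $\pm$. The mixture equation of state $p=\mathcal P(\alpha,\rho,e)$ is defined by requiring pressure and temperature equilibrium between the phases: given $\alpha\in[-1,1]$, $\rho>0$, $e>0$, one solves for $\rho^\pm,e^\pm$ the system $(1+\alpha)\rho^++(1-\alpha)\rho^-=2\rho$, $(1+\alpha)\rho^+e^++(1-\alpha)\rho^-e^-=2\rho e$, $p^+=p^-$, $T^+=T^-$, and sets $p=p^\pm$, $T=T^\pm$. Here $s^\pm$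 denotes the specific entropy of phase $\pm$ (a function of $(\rho^\pm,e^\pm)$ satisfying $T^\pm ds^\pm=de^\pm+p^\pm d(1/\rho^\pm)$). *)

theory Defs
  imports "HOL-Analysis.Analysis"
begin

text \<open>Points of space-time are pairs (t, x) with t :: real and x :: real^'n (R^d, d = CARD('n)).\<close>

definition pt :: "(real \<times> (real^'n) \<Rightarrow> real) \<Rightarrow> real \<times> (real^'n) \<Rightarrow> real" where
  "pt f z = deriv (\<lambda>\<tau>. f (\<tau>, snd z)) (fst z)"

definition px :: "'n \<Rightarrow> (real \<times> (real^'n) \<Rightarrow> real) \<Rightarrow> real \<times> (real^'n) \<Rightarrow> real" where
  "px i f z = deriv (\<lambda>\<xi>. f (fst z, snd z + \<xi> *\<^sub>R axis i 1)) 0"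

definition divg :: "(real \<times> (real^'n) \<Rightarrow> real^'n) \<Rightarrow> real \<times> (real^'n) \<Rightarrow> real" where
  "divg F z = (\<Sum>i\<in>UNIV. px i (\<lambda>w. F w $ i) z)"

definition adv :: "(real \<times> (real^'n) \<Rightarrow> real^'n) \<Rightarrow> (real \<times> (real^'n) \<Rightarrow> real) \<Rightarrow> real \<times> (real^'n) \<Rightarrow> real" where
  "adv u f z = (\<Sum>i\<in>UNIV. (u z $ i) * px i f z)"

text \<open>Stiffened gas: p + pi = (gamma-1) rho e,  e = Cv T + pi/(gamma rho).\<close>
definition sg_pressure :: "real \<Rightarrow> real \<Rightarrow> real \<Rightarrow> real \<Rightarrow> real" where
  "sg_pressure \<gamma> \<pi> r e = (\<gamma> - 1) * r * e - \<pi>"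

definition sg_temp :: "real \<Rightarrow> real \<Rightarrow> real \<Rightarrow> real \<Rightarrow> real \<Rightarrow> real" where
  "sg_temp \<gamma> Cv \<pi> r e = (e - \<pi> / (\<gamma> * r)) / Cv"

text \<open>S is a specific entropy of the phase: T dS = de + p d(1/rho), on the physical
  domain rho > 0, T > 0.\<close>
definition is_entropy :: "real \<Rightarrow> real \<Rightarrow> real \<Rightarrow> (real \<Rightarrow> real \<Rightarrow> real) \<Rightarrow> bool" where
  "is_entropy \<gamma> Cv \<pi> S \<longleftrightarrow>
     (\<forall>r e. r > 0 \<longrightarrow> sg_temp \<gamma> Cv \<pi> r e > 0 \<longrightarrow>
        ((\<lambda>(a, b). S a b) has_derivative
          (\<lambda>(dr, de). (de - sg_pressure \<gamma> \<pi> r e / r\<^sup>2 * dr) / sg_temp \<gamma> Cv \<pi> r e)) (at (r, e)))"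

definition mix_cs :: "real \<Rightarrow> real \<Rightarrow> real \<Rightarrow> real \<Rightarrow> real \<Rightarrow> real \<Rightarrow> real \<Rightarrow> real \<Rightarrow> real" where
  "mix_cs gp gm pip pim a rp rm p =
    (let csp2 = (gp * p + pip) / rp; csm2 = (gm * p + pim) / rm;
         rho = ((1 + a) * rp + (1 - a) * rm) / 2;
         rhoa2 = (1 + a) * rp * csp2 / (2 * (gp - 1)) + (1 - a) * rm * csm2 / (2 * (gm - 1));
         inv = (1 + a) * gp / (2 * rp * csp2) + (1 - a) * gm / (2 * rm * csm2) - 1 / rhoa2
     in sqrt (1 / (rho * inv)))"

definition mix_delta :: "real \<Rightarrow> real \<Rightarrow> real \<Rightarrow> real \<Rightarrow> real \<Rightarrow> real \<Rightarrow> real \<Rightarrow> real \<Rightarrow> real" where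
  "mix_delta gp gm pip pim a rp rm p =
    (let csp2 = (gp * p + pip) / rp; csm2 = (gm * p + pim) / rm;
         rho = ((1 + a) * rp + (1 - a) * rm) / 2;
         cs = mix_cs gp gm pip pim a rp rm p
     in (1/2) * (rho * cs\<^sup>2 * (gm * pip - gp * pim)) / (rp * rm * csp2 * csm2))"

end

theory Submission
  imports Defs
begin


lemma vec_nth_deriv:
  "(f has_derivative f') F \<Longrightarrow> ((\<lambda>x. f x $ i) has_derivative (\<lambda>x. f' x $ i)) F"
  using bounded_linear.has_derivative[OF bounded_linear_vec_nth] by blast

lemma pt_eq:
  fixes f :: "real \<times> (real^'n) \<Rightarrow> real"
  assumes "(f has_derivative f') (at z)"
  shows "pt f z = f' (1, 0)"
proof -
  have h: "((\<lambda>\<tau>. (\<tau>, snd z)) has_derivative (\<lambda>t. (t, 0))) (at (fst z))"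
    by (auto intro!: derivative_eq_intros)
  have "(f \<circ> (\<lambda>\<tau>. (\<tau>, snd z)) has_derivative f' \<circ> (\<lambda>t. (t, 0))) (at (fst z))"
    apply (rule diff_chain_at[OF h]) using assms by simp
  hence "((\<lambda>\<tau>. f (\<tau>, snd z)) has_real_derivative f' (1,0)) (at (fst z))"
    unfolding has_field_derivative_def o_def
  proof -
    assume a: "((\<lambda>x. f (x, snd z)) has_derivative (\<lambda>x. f' (x, 0))) (at (fst z))"
    have "(\<lambda>x. f' (x, 0)) = (\<lambda>x. x * f' (1,0))"
    proof
      fix x :: real
      have "f' (x,0) = f' (x *\<^sub>R (1,0))" by simp
      also have "\<dots> = x *\<^sub>R f' (1,0)"
        using has_derivative_bounded_linear[OF assms] linear_scale bounded_linear.linear by blast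
      finally show "f' (x, 0) = x * f' (1,0)" by simp
    qed
    moreover have "(\<lambda>x. x * f' (1,0)) = (*) (f' (1, 0))" by (auto simp: fun_eq_iff)
    ultimately show "((\<lambda>x. f (x, snd z)) has_derivative (*) (f' (1, 0))) (at (fst z))"
      using a by simp
  qed
  thus ?thesis unfolding pt_def by (rule DERIV_imp_deriv)
qed

lemma px_eq:
  fixes f :: "real \<times> (real^'n) \<Rightarrow> real"
  assumes "(f has_derivative f') (at z)"
  shows "px i f z = f' (0, axis i 1)"
proof -
  have h: "((\<lambda>\<xi>. (fst z, snd z + \<xi> *\<^sub>R axis i 1)) has_derivative (\<lambda>t. (0, t *\<^sub>R axis i 1))) (at 0)"
    by (auto intro!: derivative_eq_intros)
  have z: "(fst z, snd z + 0 *\<^sub>R axis i 1) = z" by simp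
  have "(f \<circ> (\<lambda>\<xi>. (fst z, snd z + \<xi> *\<^sub>R axis i 1)) has_derivative f' \<circ> (\<lambda>t. (0, t *\<^sub>R axis i 1))) (at 0)"
    apply (rule diff_chain_at[OF h]) using assms z by simp
  moreover have "(\<lambda>x. f' (0, x *\<^sub>R axis i 1)) = (\<lambda>x. x * f' (0, axis i 1))"
  proof
    fix x :: real
    have "f' (0, x *\<^sub>R axis i 1) = f' (x *\<^sub>R (0, axis i 1))" by simp
    also have "\<dots> = x *\<^sub>R f' (0, axis i 1)"
      using has_derivative_bounded_linear[OF assms] linear_scale bounded_linear.linear by blast
    finally show "f' (0, x *\<^sub>R axis i 1) = x * f' (0, axis i 1)" by simp
  qed
  moreover have "(\<lambda>x. x * f' (0, axis i 1)) = (*) (f' (0, axis i 1))" by (auto simp: fun_eq_iff)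
  ultimately have "((\<lambda>\<xi>. f (fst z, snd z + \<xi> *\<^sub>R axis i 1)) has_real_derivative f' (0, axis i 1)) (at 0)"
    unfolding has_field_derivative_def o_def by simp
  thus ?thesis unfolding px_def by (rule DERIV_imp_deriv)
qed

lemma lin_expand:
  fixes L :: "real \<times> (real^'n) \<Rightarrow> real"
  assumes "linear L"
  shows "L (s, x) = s * L (1, 0) + (\<Sum>i\<in>UNIV. x $ i * L (0, axis i 1))"
proof -
  have x: "x = (\<Sum>i\<in>UNIV. (x $ i) *\<^sub>R axis i 1)"
    using basis_expansion[of x] by (simp add: scalar_mult_eq_scaleR)
  have "(s, x) = s *\<^sub>R (1, 0) + (\<Sum>i\<in>UNIV. (x $ i) *\<^sub>R (0, axis i 1))"
    apply (subst x) by (simp add: sum_prod)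
  hence "L (s,x) = L (s *\<^sub>R (1, 0) + (\<Sum>i\<in>UNIV. (x $ i) *\<^sub>R (0, axis i 1)))" by simp
  also have "\<dots> = L (s *\<^sub>R (1, 0)) + (\<Sum>i\<in>UNIV. L ((x $ i) *\<^sub>R (0, axis i 1)))"
    using assms by (simp only: linear_add linear_sum)
  also have "\<dots> = s * L (1, 0) + (\<Sum>i\<in>UNIV. x $ i * L (0, axis i 1))"
    using assms by (simp only: linear_scale real_scaleR_def)
  finally show ?thesis .
qed

lemma mat_eq:
  fixes f :: "real \<times> (real^'n) \<Rightarrow> real"
  assumes "(f has_derivative f') (at z)"
  shows "pt f z + adv u f z = f' (1, u z)"
proof -
  have l: "linear f'" using has_derivative_linear[OF assms] .
  show ?thesis unfolding adv_def pt_eq[OF assms] px_eq[OF assms] lin_expand[OF l, of 1 "u z"] by simp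
qed

lemma divg_eq:
  fixes F :: "real \<times> (real^'n) \<Rightarrow> real^'n"
  assumes "(F has_derivative F') (at z)"
  shows "divg F z = (\<Sum>i\<in>UNIV. F' (0, axis i 1) $ i)"
  unfolding divg_def using px_eq[OF vec_nth_deriv[OF assms]] by simp

lemma flux_eq:
  fixes m :: "real \<times> (real^'n) \<Rightarrow> real"
  assumes m: "(m has_derivative M) (at z)" and u: "(u has_derivative U) (at z)"
  shows "divg (\<lambda>w. m w *\<^sub>R u w) z = M (0, u z) + m z * (\<Sum>i\<in>UNIV. U (0, axis i 1) $ i)"
proof -
  have d: "((\<lambda>w. m w *\<^sub>R u w) has_derivative (\<lambda>v. M v *\<^sub>R u z + m z *\<^sub>R U v)) (at z)"
    using m u by (auto intro!: derivative_eq_intros)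
  have l: "linear M" using has_derivative_linear[OF m] .
  show ?thesis unfolding divg_eq[OF d] lin_expand[OF l, of 0 "u z"]
    using linear_0[OF l]
    by (simp add: sum.distrib sum_distrib_left algebra_simps)
qed

lemma const_deriv:
  assumes "(f has_derivative f') (at z)" "open D" "z \<in> D" "\<And>w. w \<in> D \<Longrightarrow> f w = c"
  shows "f' v = 0"
proof -
  have "((\<lambda>w. c) has_derivative (\<lambda>v. 0)) (at z)" by simp
  hence "(f has_derivative (\<lambda>v. 0)) (at z)"
    by (rule has_derivative_transform_within_open[OF _ assms(2,3)]) (use assms(4) in auto)
  thus ?thesis using has_derivative_unique[OF assms(1)] by metis
qed



lemma alg_main:
  fixes gp gm Cvp Cvm pip pim ap am rp rm ep em p e dA dRp dRm dEp dEm dP dE th :: real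
  assumes g: "gp > 1" "gm > 1" "Cvp > 0" "Cvm > 0" "pip \<ge> 0" "pim \<ge> 0"
    and fr: "0 \<le> ap" "0 \<le> am" "ap + am = 1"
    and rpos: "rp > 0" "rm > 0"
    and Hp: "(gp-1)*rp*ep - pip = p" and Hm: "(gm-1)*rm*em - pim = p"
    and Tpos: "(ep - pip/(gp*rp))/Cvp > 0"
    and HT: "(ep - pip/(gp*rp))/Cvp = (em - pim/(gm*rm))/Cvm"
    and HE: "(1+(ap-am))*rp*ep + (1-(ap-am))*rm*em = 2*(ap*rp+am*rm)*e"
    and dHp: "(gp-1)*(dRp*ep + rp*dEp) = dP"
    and dHm: "(gm-1)*(dRm*em + rm*dEm) = dP"
    and dHT: "Cvm*gm*(dRm*(gp*rp*ep - pip) + rm*gp*(dRp*ep+rp*dEp))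
             = Cvp*gp*(dRp*(gm*rm*em - pim) + rp*gm*(dRm*em+rm*dEm))"
    and dHE: "2*dA*rp*ep + (1+(ap-am))*(dRp*ep+rp*dEp) - 2*dA*rm*em + (1-(ap-am))*(dRm*em+rm*dEm)
             = 2*((dA*rp + ap*dRp - dA*rm + am*dRm)*e + (ap*rp+am*rm)*dE)"
    and M1: "dA*rp + ap*dRp + ap*rp*th = 0"
    and M2: "-dA*rm + am*dRm + am*rm*th = 0"
    and En: "(ap*rp+am*rm)*dE + p*th = 0"
  shows "dP + (ap*rp+am*rm) * (mix_cs gp gm pip pim (ap-am) rp rm p)\<^sup>2 * th = 0"
    and "2*dA + (1 - (ap-am)\<^sup>2) * mix_delta gp gm pip pim (ap-am) rp rm p * th = 0"
    and "ap*rp*(dEp - p/rp\<^sup>2*dRp) + am*rm*(dEm - p/rm\<^sup>2*dRm) = 0"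
proof -
  define Xp where "Xp = gp*p+pip"
  define Xm where "Xm = gm*p+pim"
  define rho where "rho = ap*rp+am*rm"
  define q1 where "q1 = gp - 1"
  define q2 where "q2 = gm - 1"
  have q1: "q1 > 0" and q2: "q2 > 0" using g unfolding q1_def q2_def by auto
  have rho_pos: "rho > 0" unfolding rho_def using fr rpos
    by (smt (verit) mult_nonneg_nonneg mult_pos_pos)
  have ep: "ep = (p+pip)/((gp-1)*rp)" using Hp g rpos by (simp add: field_simps)
  have em: "em = (p+pim)/((gm-1)*rm)" using Hm g rpos by (simp add: field_simps)
  have Tp: "(ep - pip/(gp*rp))/Cvp = Xp/(Cvp*gp*(gp-1)*rp)"
    unfolding ep Xp_def using g rpos by (simp add: field_simps)
  have Tm: "(em - pim/(gm*rm))/Cvm = Xm/(Cvm*gm*(gm-1)*rm)"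
    unfolding em Xm_def using g rpos by (simp add: field_simps)
  have denp: "Cvp*gp*(gp-1)*rp > 0" using g rpos by simp
  have denm: "Cvm*gm*(gm-1)*rm > 0" using g rpos by simp
  have Xp_pos: "Xp > 0" using Tpos Tp denp by (simp add: zero_less_divide_iff)
  have Xm_pos: "Xm > 0" using Tpos HT Tm denm by (simp add: zero_less_divide_iff)
  have Teq0: "Xp/(Cvp*gp*(gp-1)*rp) = Xm/(Cvm*gm*(gm-1)*rm)" using HT Tp Tm by simp
  have Teq: "Xp*Cvm*gm*q2*rm = Xm*Cvp*gp*q1*rp"
  proof -
    have "Xp*(Cvm*gm*(gm-1)*rm) = Xm*(Cvp*gp*(gp-1)*rp)"
      using frac_eq_eq[of "Cvp*gp*(gp-1)*rp" "Cvm*gm*(gm-1)*rm" Xp Xm] Teq0 denp denm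
      by (metis less_irrefl)
    thus ?thesis unfolding q1_def q2_def by (simp add: algebra_simps)
  qed
  have Hp': "q1*rp*ep - pip = p" using Hp unfolding q1_def .
  have Hm': "q2*rm*em - pim = p" using Hm unfolding q2_def .
  have dHp': "q1*(dRp*ep + rp*dEp) = dP" using dHp unfolding q1_def .
  have dHm': "q2*(dRm*em + rm*dEm) = dP" using dHm unfolding q2_def .
  have a1: "ap*dRp = -dA*rp - ap*rp*th" using M1 by simp
  have a2: "am*dRm = dA*rm - am*rm*th" using M2 by simp
  have dT: "Cvm*gm*(dRm*Xp*q2 + rm*gp*dP*q2) = Cvp*gp*(dRp*Xm*q1 + rp*gm*dP*q1)"
  proof -
    have "q1*q2*(Cvm*gm*(dRm*(gp*rp*ep - pip) + rm*gp*(dRp*ep+rp*dEp)))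
             = q1*q2*(Cvp*gp*(dRp*(gm*rm*em - pim) + rp*gm*(dRm*em+rm*dEm)))" using dHT by simp
    thus ?thesis using Hp' Hm' dHp' dHm' unfolding Xp_def Xm_def q1_def q2_def by algebra
  qed
  have key0: "dA*Xp*Xm*(Cvp*gp*q1*rp) = ap*am*(gm*Xp - gp*Xm)*dP*(Cvp*gp*q1*rp)"
    using a1 a2 fr(3) Teq dT by algebra
  have key: "dA*Xp*Xm = ap*am*(gm*Xp - gp*Xm)*dP"
    using key0 g q1 rpos by simp
  have X: "ap*rp*dEp + am*rm*dEm = -p*th"
    using dHE M1 M2 En HE fr(3) by algebra
  have e1: "q1*q2*(ap*rp*dEp) = q2*ap*dP + q2*(p+pip)*(dA+ap*th)"
  proof -
    have "q1*q2*(ap*rp*dEp) = q2*ap*(q1*(dRp*ep + rp*dEp)) - q2*q1*ep*(ap*dRp)" by (simp add: algebra_simps)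
    also have "\<dots> = q2*ap*dP + q2*(p+pip)*(dA+ap*th)" unfolding dHp' a1 Hp'[symmetric] by (simp add: algebra_simps)
    finally show ?thesis .
  qed
  have e2: "q1*q2*(am*rm*dEm) = q1*am*dP - q1*(p+pim)*(dA-am*th)"
  proof -
    have "q1*q2*(am*rm*dEm) = q1*am*(q2*(dRm*em + rm*dEm)) - q2*q1*em*(am*dRm)" by (simp add: algebra_simps)
    also have "\<dots> = q1*am*dP - q1*(p+pim)*(dA-am*th)" unfolding dHm' a2 Hm'[symmetric] by (simp add: algebra_simps)
    finally show ?thesis .
  qed
  have e3: "q1*q2*(ap*rp*dEp) + q1*q2*(am*rm*dEm) = -q1*q2*p*th"
  proof -
    have "q1*q2*(ap*rp*dEp) + q1*q2*(am*rm*dEm) = q1*q2*(ap*rp*dEp + am*rm*dEm)" by (simp add: algebra_simps)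
    also have "\<dots> = -q1*q2*p*th" unfolding X by simp
    finally show ?thesis .
  qed
  have E': "dA*(Xp*q2 - Xm*q1) + dP*(ap*q2 + am*q1) = -(ap*Xp*q2 + am*Xm*q1)*th"
  proof -
    have gp: "gp = q1 + 1" and gm: "gm = q2+1" unfolding q1_def q2_def by auto
    have "dP*(ap*q2 + am*q1) + dA*(q2*(p+pip) - q1*(p+pim)) + th*(ap*q2*(p+pip) + am*q1*(p+pim)) = -q1*q2*p*th"
      using e1 e2 e3 by (simp add: algebra_simps)
    thus ?thesis unfolding Xp_def Xm_def gp gm using fr(3)
      by (simp add: algebra_simps) (metis (no_types, opaque_lifting) add.commute distrib_left mult.assoc mult.left_commute mult_1 ring_class.ring_distribs(2))
  qed
  show "ap*rp*(dEp - p/rp\<^sup>2*dRp) + am*rm*(dEm - p/rm\<^sup>2*dRm) = 0"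
  proof -
    have "ap*rp*(dEp - p/rp\<^sup>2*dRp) + am*rm*(dEm - p/rm\<^sup>2*dRm)
          = (ap*rp*dEp + am*rm*dEm) - p*((ap*dRp)/rp + (am*dRm)/rm)"
      using rpos by (simp add: field_simps power2_eq_square)
    also have "(ap*dRp)/rp + (am*dRm)/rm = -th" unfolding a1 a2 using rpos fr(3)
      by (simp add: field_simps) (metis add.commute distrib_right mult_1)
    finally show ?thesis using X by simp
  qed
  define Q where "Q = ap*Xp/q1 + am*Xm/q2"
  define inv where "inv = ap*gp/Xp + am*gm/Xm - 1/Q"
  have Q_pos: "Q > 0" unfolding Q_def using fr Xp_pos Xm_pos q1 q2
    by (smt (verit) divide_nonneg_pos divide_pos_pos mult_nonneg_nonneg mult_pos_pos)
  have CS: "Q*(ap*q1/Xp + am*q2/Xm) \<ge> 1"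
  proof -
    define x where "x = Xp/q1"
    define y where "y = Xm/q2"
    have x: "x > 0" and y: "y > 0" unfolding x_def y_def using Xp_pos Xm_pos q1 q2 by auto
    have "Q*(ap*q1/Xp + am*q2/Xm) = (ap*x + am*y)*(ap/x + am/y)"
      unfolding Q_def x_def y_def using q1 q2 Xp_pos Xm_pos by (simp add: field_simps)
    also have "\<dots> = 1 + ap*am*(x-y)\<^sup>2/(x*y)"
      using x y fr(3) by (simp add: field_simps power2_eq_square) algebra
    also have "\<dots> \<ge> 1" using x y fr by simp
    finally show ?thesis .
  qed
  have inv_pos: "inv > 0"
  proof -
    have "1/Q \<le> ap*q1/Xp + am*q2/Xm" using CS Q_pos by (simp add: divide_le_eq mult.commute)
    hence A: "inv \<ge> ap*gp/Xp + am*gm/Xm - (ap*q1/Xp + am*q2/Xm)" unfolding inv_def by simp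
    have B: "ap*gp/Xp + am*gm/Xm - (ap*q1/Xp + am*q2/Xm) = ap/Xp + am/Xm"
      unfolding q1_def q2_def using Xp_pos Xm_pos by (simp add: field_simps)
    have C: "ap/Xp + am/Xm > 0" using fr Xp_pos Xm_pos
      by (smt (verit) divide_nonneg_pos divide_pos_pos)
    show ?thesis using A B C by linarith
  qed
  have br: "ap*am*(gm*Xp - gp*Xm)/(Xp*Xm)*(Xp*q2 - Xm*q1) + (ap*q2 + am*q1) = q1*q2*Q*inv"
  proof -
    have gp: "gp = q1 + 1" and gm: "gm = q2+1" unfolding q1_def q2_def by auto
    have Qq: "q1*q2*Q = ap*Xp*q2 + am*Xm*q1" unfolding Q_def using q1 q2 by (simp add: field_simps)
    have "q1*q2*Q*inv = q1*q2*Q*(ap*gp/Xp + am*gm/Xm) - q1*q2" unfolding inv_def using Q_pos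
      by (simp add: right_diff_distrib)
    also have "\<dots> = (ap*Xp*q2 + am*Xm*q1)*(ap*gp/Xp + am*gm/Xm) - q1*q2" unfolding Qq ..
    also have "\<dots> = ap*am*(gm*Xp - gp*Xm)/(Xp*Xm)*(Xp*q2 - Xm*q1) + (ap*q2 + am*q1)"
    proof -
      have am: "am = 1 - ap" using fr(3) by simp
      have "(ap*Xp*q2 + am*Xm*q1)*(ap*gp/Xp + am*gm/Xm) - q1*q2 = 
            ((ap*Xp*q2 + am*Xm*q1)*(ap*gp*Xm + am*gm*Xp) - q1*q2*Xp*Xm)/(Xp*Xm)"
        using Xp_pos Xm_pos by (simp add: field_simps)
      also have "\<dots> = (ap*am*(gm*Xp - gp*Xm)*(Xp*q2 - Xm*q1) + (ap*q2 + am*q1)*(Xp*Xm))/(Xp*Xm)"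
        unfolding gp gm am by (simp add: algebra_simps) 
      also have "\<dots> = ap*am*(gm*Xp - gp*Xm)/(Xp*Xm)*(Xp*q2 - Xm*q1) + (ap*q2 + am*q1)"
        using Xp_pos Xm_pos by (simp add: field_simps)
      finally show ?thesis .
    qed
    finally show ?thesis by simp
  qed
  have dP: "dP*inv = -th"
  proof -
    have dA: "dA = ap*am*(gm*Xp - gp*Xm)/(Xp*Xm)*dP" using key Xp_pos Xm_pos by (simp add: field_simps)
    have Qq: "q1*q2*Q = ap*Xp*q2 + am*Xm*q1" unfolding Q_def using q1 q2 by (simp add: field_simps)
    have "dP*(q1*q2*Q*inv) = dA*(Xp*q2 - Xm*q1) + dP*(ap*q2 + am*q1)"
      unfolding br[symmetric] dA by (simp add: algebra_simps)
    also have "\<dots> = -(ap*Xp*q2 + am*Xm*q1)*th" by (rule E')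
    finally have "dP*(q1*q2*Q*inv) = -(q1*q2*Q)*th" unfolding Qq .
    hence "(q1*q2*Q)*(dP*inv) = (q1*q2*Q)*(-th)" by (simp add: algebra_simps)
    thus ?thesis using q1 q2 Q_pos by (metis mult_cancel_left mult_pos_pos less_irrefl)
  qed
  have f1: "1 + (ap-am) = 2*ap" and f2: "1-(ap-am) = 2*am" using fr(3) by auto
  have f3: "((2*ap)*rp + (2*am)*rm)/2 = rho" unfolding rho_def by simp
  have f4: "2*ap*rp*((gp*p+pip)/rp)/(2*(gp-1)) + 2*am*rm*((gm*p+pim)/rm)/(2*(gm-1)) = Q"
  proof -
    have "2*ap*rp*((gp*p+pip)/rp)/(2*(gp-1)) = ap*(gp*p+pip)/(gp-1)" using rpos by (simp add: divide_simps)
    moreover have "2*am*rm*((gm*p+pim)/rm)/(2*(gm-1)) = am*(gm*p+pim)/(gm-1)" using rpos by (simp add: divide_simps)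
    ultimately show ?thesis unfolding Q_def Xp_def Xm_def q1_def q2_def by simp
  qed
  have f5: "2*ap*gp/(2*rp*((gp*p+pip)/rp)) + 2*am*gm/(2*rm*((gm*p+pim)/rm)) - 1/Q = inv"
  proof -
    have "2*ap*gp/(2*rp*((gp*p+pip)/rp)) = ap*gp/(gp*p+pip)" using rpos Xp_pos unfolding Xp_def by (simp add: divide_simps)
    moreover have "2*am*gm/(2*rm*((gm*p+pim)/rm)) = am*gm/(gm*p+pim)" using rpos Xm_pos unfolding Xm_def by (simp add: divide_simps)
    ultimately show ?thesis unfolding inv_def Xp_def Xm_def by simp
  qed
  have cs: "mix_cs gp gm pip pim (ap-am) rp rm p = sqrt (1/(rho*inv))"
    unfolding mix_cs_def Let_def by (simp only: f1 f2 f3 f4 f5)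
  have cs2: "rho * (mix_cs gp gm pip pim (ap-am) rp rm p)\<^sup>2 = 1/inv"
    unfolding cs using rho_pos inv_pos by simp
  have dP': "dP = -th/inv" using dP inv_pos by (simp add: field_simps)
  show "dP + (ap*rp+am*rm) * (mix_cs gp gm pip pim (ap-am) rp rm p)\<^sup>2 * th = 0"
    using cs2 unfolding rho_def dP' by simp
  have dl: "mix_delta gp gm pip pim (ap-am) rp rm p = (1/2)*(1/inv)*(gm*pip - gp*pim)/(Xp*Xm)"
  proof -
    have "mix_delta gp gm pip pim (ap-am) rp rm p
       = (1/2) * (rho * (mix_cs gp gm pip pim (ap-am) rp rm p)\<^sup>2 * (gm * pip - gp * pim)) / (rp * rm * ((gp*p+pip)/rp) * ((gm*p+pim)/rm))"
      unfolding mix_delta_def Let_def f1 f2 f3 ..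
    also have "\<dots> = (1/2)*(1/inv)*(gm*pip - gp*pim)/(Xp*Xm)"
      unfolding cs2 Xp_def Xm_def using rpos by simp
    finally show ?thesis .
  qed
  have gd: "gm*Xp - gp*Xm = gm*pip - gp*pim" unfolding Xp_def Xm_def by (simp add: algebra_simps)
  have dA: "dA = ap*am*(gm*pip - gp*pim)/(Xp*Xm)*dP" using key Xp_pos Xm_pos unfolding gd[symmetric]
    by (simp add: field_simps)
  have sq: "1 - (ap-am)\<^sup>2 = 4*ap*am" using fr(3) by algebra
  show "2*dA + (1 - (ap-am)\<^sup>2) * mix_delta gp gm pip pim (ap-am) rp rm p * th = 0"
    unfolding sq dl dA dP' using inv_pos Xp_pos Xm_pos by (simp add: field_simps)
qed


lemma lin_split:
  fixes L :: "real \<times> (real^'n) \<Rightarrow> real"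
  assumes "linear L" shows "L (1, 0) + L (0, x) = L (1, x)"
proof -
  have "L ((1,0) + (0,x)) = L (1,0) + L (0,x)" using assms by (simp only: linear_add)
  thus ?thesis by simp
qed

lemma lin_zero:
  fixes L :: "real \<times> (real^'n) \<Rightarrow> real"
  assumes "linear L" shows "(\<Sum>i\<in>UNIV. x $ i * L (0, axis i 1)) = L (0, x)"
  using lin_expand[OF assms, of 0 x] by simp

lemma cons_eq:
  fixes m1 m2 :: "real \<times> (real^'n) \<Rightarrow> real"
  assumes m1: "(m1 has_derivative M1) (at z)" and m2: "(m2 has_derivative M2) (at z)"
    and u: "(u has_derivative U) (at z)"
  shows "pt m1 z + divg (\<lambda>w. m2 w *\<^sub>R u w) z = M1 (1,0) + M2 (0, u z) + m2 z * (\<Sum>i\<in>UNIV. U (0, axis i 1) $ i)"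
  using pt_eq[OF m1] flux_eq[OF m2 u] by simp

lemma mom_eq:
  fixes rho p :: "real \<times> (real^'n) \<Rightarrow> real" and u :: "real \<times> (real^'n) \<Rightarrow> real^'n"
  assumes r: "(rho has_derivative R) (at z)" and u: "(u has_derivative U) (at z)"
    and p: "(p has_derivative P) (at z)"
  shows "pt (\<lambda>w. rho w * (u w $ j)) z
          + (\<Sum>i\<in>UNIV. px i (\<lambda>w. rho w * (u w $ i) * (u w $ j) + (if i = j then p w else 0)) z)
    = R (1, u z) * (u z $ j) + rho z * (\<Sum>i\<in>UNIV. U (0, axis i 1) $ i) * (u z $ j)
      + rho z * (U (1, u z) $ j) + P (0, axis j 1)"
proof -
  have uj: "\<And>k. ((\<lambda>w. u w $ k) has_derivative (\<lambda>v. U v $ k)) (at z)" using vec_nth_deriv[OF u] .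
  have d1: "((\<lambda>w. rho w * (u w $ j)) has_derivative (\<lambda>v. R v * (u z $ j) + rho z * (U v $ j))) (at z)"
    using r uj by (auto intro!: derivative_eq_intros simp: algebra_simps)
  have d2: "((\<lambda>w. rho w * (u w $ i) * (u w $ j) + (if i = j then p w else 0)) has_derivative
      (\<lambda>v. R v * (u z $ i) * (u z $ j) + rho z * (U v $ i) * (u z $ j) + rho z * (u z $ i) * (U v $ j)
          + (if i = j then P v else 0))) (at z)" for i
  proof (cases "i = j")
    case True thus ?thesis using r uj p by (auto intro!: derivative_eq_intros simp: algebra_simps)
  next
    case False thus ?thesis using r uj by (auto intro!: derivative_eq_intros simp: algebra_simps)
  qed
  have lR: "linear R" using has_derivative_linear[OF r] .
  have lU: "linear (\<lambda>v. U v $ j)" using has_derivative_linear[OF uj] .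
  have s1: "(\<Sum>i\<in>UNIV. R (0, axis i 1) * (u z $ i) * (u z $ j)) = R (0, u z) * (u z $ j)"
  proof -
    have "(\<Sum>i\<in>UNIV. R (0, axis i 1) * (u z $ i) * (u z $ j)) = (\<Sum>i\<in>UNIV. u z $ i * R (0, axis i 1)) * (u z $ j)"
      unfolding sum_distrib_right by (simp add: mult_ac)
    thus ?thesis using lin_zero[OF lR, of "u z"] by simp
  qed
  have s2: "(\<Sum>i\<in>UNIV. rho z * (u z $ i) * (U (0, axis i 1) $ j)) = rho z * (U (0, u z) $ j)"
    using lin_zero[OF lU, of "u z"] by (simp add: sum_distrib_left[symmetric] mult.assoc)
  have s3: "(\<Sum>i\<in>UNIV. rho z * (U (0, axis i 1) $ i) * (u z $ j)) = rho z * (\<Sum>i\<in>UNIV. U (0, axis i 1) $ i) * (u z $ j)"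
    by (simp add: sum_distrib_left sum_distrib_right mult.assoc)
  have s4: "(\<Sum>i\<in>UNIV. (if i = j then P (0, axis i 1) else 0)) = P (0, axis j 1)"
    by simp
  have "pt (\<lambda>w. rho w * (u w $ j)) z
          + (\<Sum>i\<in>UNIV. px i (\<lambda>w. rho w * (u w $ i) * (u w $ j) + (if i = j then p w else 0)) z)
      = R (1,0) * (u z $ j) + rho z * (U (1,0) $ j) +
        ((\<Sum>i\<in>UNIV. R (0, axis i 1) * (u z $ i) * (u z $ j)) + (\<Sum>i\<in>UNIV. rho z * (U (0, axis i 1) $ i) * (u z $ j))
        + (\<Sum>i\<in>UNIV. rho z * (u z $ i) * (U (0, axis i 1) $ j)) + (\<Sum>i\<in>UNIV. (if i = j then P (0, axis i 1) else 0)))"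
    unfolding pt_eq[OF d1] px_eq[OF d2] by (simp add: sum.distrib)
  also have "\<dots> = (R (1,0) + R (0, u z)) * (u z $ j) + rho z * (\<Sum>i\<in>UNIV. U (0, axis i 1) $ i) * (u z $ j)
      + rho z * (U (1,0) $ j + U (0, u z) $ j) + P (0, axis j 1)"
    unfolding s1 s2 s3 s4 by (simp add: algebra_simps)
  also have "\<dots> = R (1, u z) * (u z $ j) + rho z * (\<Sum>i\<in>UNIV. U (0, axis i 1) $ i) * (u z $ j)
      + rho z * (U (1, u z) $ j) + P (0, axis j 1)"
    using lin_split[OF lR, of "u z"] lin_split[OF lU, of "u z"] by simp
  finally show ?thesis .
qed

lemma EE_deriv:
  fixes e :: "real \<times> (real^'n) \<Rightarrow> real" and u :: "real \<times> (real^'n) \<Rightarrow> real^'n"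
  assumes e: "(e has_derivative E) (at z)" and u: "(u has_derivative U) (at z)"
  shows "((\<lambda>w. e w + (norm (u w))\<^sup>2 / 2) has_derivative (\<lambda>v. E v + u z \<bullet> U v)) (at z)"
proof -
  have "((\<lambda>w. e w + (u w \<bullet> u w) / 2) has_derivative (\<lambda>v. E v + u z \<bullet> U v)) (at z)"
    using e u by (auto intro!: derivative_eq_intros simp: inner_commute)
  moreover have "(\<lambda>w. e w + (u w \<bullet> u w) / 2) = (\<lambda>w. e w + (norm (u w))\<^sup>2 / 2)"
    by (simp add: power2_norm_eq_inner)
  ultimately show ?thesis by simp
qed



lemma T_cross:
  fixes gp gm Cvp Cvm rp rm ep em pip pim :: real
  assumes "gp > 0" "gm > 0" "Cvp > 0" "Cvm > 0" "rp > 0" "rm > 0"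
    and "(ep - pip/(gp*rp))/Cvp = (em - pim/(gm*rm))/Cvm"
  shows "Cvm*gm*rm*(gp*rp*ep - pip) - Cvp*gp*rp*(gm*rm*em - pim) = 0"
proof -
  have a: "(ep - pip/(gp*rp))/Cvp = (gp*rp*ep - pip)/(Cvp*gp*rp)" using assms by (simp add: field_simps)
  have b: "(em - pim/(gm*rm))/Cvm = (gm*rm*em - pim)/(Cvm*gm*rm)" using assms by (simp add: field_simps)
  have "(gp*rp*ep - pip)*(Cvm*gm*rm) = (gm*rm*em - pim)*(Cvp*gp*rp)"
    using assms(7) unfolding a b using assms(1-6)
    by (metis frac_eq_eq mult_pos_pos less_irrefl)
  thus ?thesis by (simp add: algebra_simps)
qed

theorem mainTheorem1:
  fixes gp gm Cvp Cvm pip pim :: real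
    and D :: "(real \<times> (real^'n)) set"
    and ap am rp rm p e ep em :: "real \<times> (real^'n) \<Rightarrow> real"
    and u :: "real \<times> (real^'n) \<Rightarrow> real^'n"
    and g :: "real^'n"
    and Sp Sm :: "real \<Rightarrow> real \<Rightarrow> real"
  defines "rho \<equiv> \<lambda>z. ap z * rp z + am z * rm z"
    and "al \<equiv> \<lambda>z. ap z - am z"
    and "EE \<equiv> \<lambda>z. e z + (norm (u z))\<^sup>2 / 2"
    and "s \<equiv> \<lambda>z. ((1 + (ap z - am z)) * rp z * Sp (rp z) (ep z)
                    + (1 - (ap z - am z)) * rm z * Sm (rm z) (em z))
                 / (2 * (ap z * rp z + am z * rm z))"
  assumes gas: "gp > 1" "gm > 1" "Cvp > 0" "Cvm > 0" "pip \<ge> 0" "pim \<ge> 0"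
    and entp: "is_entropy gp Cvp pip Sp" and entm: "is_entropy gm Cvm pim Sm"
    and D_open: "open D"
    and diff: "\<And>z. z \<in> D \<Longrightarrow> ap differentiable (at z) \<and> am differentiable (at z) \<and>
                 rp differentiable (at z) \<and> rm differentiable (at z) \<and> u differentiable (at z) \<and>
                 p differentiable (at z) \<and> e differentiable (at z)"
    and frac: "\<And>z. z \<in> D \<Longrightarrow> 0 \<le> ap z \<and> ap z \<le> 1 \<and> 0 \<le> am z \<and> am z \<le> 1 \<and> ap z + am z = 1"
    and pos: "\<And>z. z \<in> D \<Longrightarrow> rp z > 0 \<and> rm z > 0 \<and> e z > 0"
    and eos_energy: "\<And>z. z \<in> D \<Longrightarrow>
          (1 + al z) * rp z * ep z + (1 - al z) * rm z * em z = 2 * rho z * e z"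
    and eos_p: "\<And>z. z \<in> D \<Longrightarrow>
          sg_pressure gp pip (rp z) (ep z) = p z \<and> sg_pressure gm pim (rm z) (em z) = p z"
    and eos_T: "\<And>z. z \<in> D \<Longrightarrow> sg_temp gp Cvp pip (rp z) (ep z) = sg_temp gm Cvm pim (rm z) (em z)"
    and T_pos: "\<And>z. z \<in> D \<Longrightarrow> sg_temp gp Cvp pip (rp z) (ep z) > 0"
    and mass_p: "\<And>z. z \<in> D \<Longrightarrow>
          pt (\<lambda>w. ap w * rp w) z + divg (\<lambda>w. (ap w * rp w) *\<^sub>R u w) z = 0"
    and mass_m: "\<And>z. z \<in> D \<Longrightarrow>
          pt (\<lambda>w. am w * rm w) z + divg (\<lambda>w. (am w * rm w) *\<^sub>R u w) z = 0"
    and momentum: "\<And>z j. z \<in> D \<Longrightarrow>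
          pt (\<lambda>w. rho w * (u w $ j)) z
          + (\<Sum>i\<in>UNIV. px i (\<lambda>w. rho w * (u w $ i) * (u w $ j) + (if i = j then p w else 0)) z)
          = rho z * (g $ j)"
    and energy: "\<And>z. z \<in> D \<Longrightarrow>
          pt (\<lambda>w. rho w * EE w) z + divg (\<lambda>w. (rho w * EE w + p w) *\<^sub>R u w) z
          = rho z * (g \<bullet> u z)"
  shows "\<forall>z\<in>D.
      (\<forall>j. pt (\<lambda>w. u w $ j) z + adv u (\<lambda>w. u w $ j) z + px j p z / rho z = g $ j)
    \<and> pt p z + adv u p z
        + rho z * (mix_cs gp gm pip pim (al z) (rp z) (rm z) (p z))\<^sup>2 * divg u z = 0
    \<and> pt al z + adv u al z
        + (1 - (al z)\<^sup>2) * mix_delta gp gm pip pim (al z) (rp z) (rm z) (p z) * divg u z = 0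
    \<and> pt s z + adv u s z = 0"
proof
  fix z assume zD: "z \<in> D"
  note dz = diff[OF zD]
  obtain A where A: "(ap has_derivative A) (at z)" using dz differentiable_def by blast
  obtain Am where Am: "(am has_derivative Am) (at z)" using dz differentiable_def by blast
  obtain Rp where Rp: "(rp has_derivative Rp) (at z)" using dz differentiable_def by blast
  obtain Rm where Rm: "(rm has_derivative Rm) (at z)" using dz differentiable_def by blast
  obtain U where U: "(u has_derivative U) (at z)" using dz differentiable_def by blast
  obtain P where P: "(p has_derivative P) (at z)" using dz differentiable_def by blast
  obtain E where E: "(e has_derivative E) (at z)" using dz differentiable_def by blast
  have fz: "0 \<le> ap z" "0 \<le> am z" "ap z + am z = 1" using frac[OF zD] by auto
  have pz: "rp z > 0" "rm z > 0" using pos[OF zD] by auto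
  have rho_pos: "\<And>w. w \<in> D \<Longrightarrow> ap w * rp w + am w * rm w > 0"
  proof -
    fix w assume "w \<in> D"
    from frac[OF this] pos[OF this] show "ap w * rp w + am w * rm w > 0"
      by (smt (verit) mult_nonneg_nonneg mult_pos_pos)
  qed
  have rhoz: "rho z > 0" unfolding rho_def using rho_pos[OF zD] by simp
  have ep_eq: "(p w + pip)/((gp-1)*rp w) = ep w" if wD: "w \<in> D" for w
  proof -
    have h: "(gp-1)*rp w*ep w - pip = p w" using eos_p[OF wD] unfolding sg_pressure_def by simp
    have "(gp-1)*rp w \<noteq> 0" using pos[OF wD] gas by simp
    then show ?thesis using h by (simp add: divide_eq_eq algebra_simps)
  qed
  have em_eq: "(p w + pim)/((gm-1)*rm w) = em w" if wD: "w \<in> D" for w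
  proof -
    have h: "(gm-1)*rm w*em w - pim = p w" using eos_p[OF wD] unfolding sg_pressure_def by simp
    have "(gm-1)*rm w \<noteq> 0" using pos[OF wD] gas by simp
    then show ?thesis using h by (simp add: divide_eq_eq algebra_simps)
  qed
  obtain Ep where Ep: "(ep has_derivative Ep) (at z)"
  proof -
    have "\<exists>F. ((\<lambda>w. (p w + pip)/((gp-1)*rp w)) has_derivative F) (at z)"
      using P Rp pz gas by (intro exI) (auto intro!: derivative_intros)
    then obtain F where "((\<lambda>w. (p w + pip)/((gp-1)*rp w)) has_derivative F) (at z)" by blast
    hence "(ep has_derivative F) (at z)"
      by (rule has_derivative_transform_within_open[OF _ D_open zD]) (use ep_eq in auto)
    thus ?thesis using that by blast
  qed
  obtain Em where Em: "(em has_derivative Em) (at z)"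
  proof -
    have "\<exists>F. ((\<lambda>w. (p w + pim)/((gm-1)*rm w)) has_derivative F) (at z)"
      using P Rm pz gas by (intro exI) (auto intro!: derivative_intros)
    then obtain F where "((\<lambda>w. (p w + pim)/((gm-1)*rm w)) has_derivative F) (at z)" by blast
    hence "(em has_derivative F) (at z)"
      by (rule has_derivative_transform_within_open[OF _ D_open zD]) (use em_eq in auto)
    thus ?thesis using that by blast
  qed
  define dv where "dv = (1::real, u z)"
  define th where "th = (\<Sum>i\<in>UNIV. U (0, axis i 1) $ i)"
  have divu: "divg u z = th" unfolding th_def by (rule divg_eq[OF U])
  have cAm: "A v + Am v = 0" for v
    by (rule const_deriv[OF _ D_open zD, of "\<lambda>w. ap w + am w" _ 1])
       (use A Am frac in \<open>auto intro!: derivative_eq_intros\<close>)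
  have cHp: "(gp-1)*(Rp v * ep z + rp z*Ep v) - P v = 0" for v
    by (rule const_deriv[OF _ D_open zD, of "\<lambda>w. (gp-1)*rp w*ep w - p w" _ pip])
       (use Rp Ep P eos_p in \<open>auto intro!: derivative_eq_intros simp: sg_pressure_def algebra_simps\<close>)
  have cHm: "(gm-1)*(Rm v * em z + rm z*Em v) - P v = 0" for v
    by (rule const_deriv[OF _ D_open zD, of "\<lambda>w. (gm-1)*rm w*em w - p w" _ pim])
       (use Rm Em P eos_p in \<open>auto intro!: derivative_eq_intros simp: sg_pressure_def algebra_simps\<close>)
  have Tcross: "\<And>w. w \<in> D \<Longrightarrow> Cvm*gm*rm w*(gp*rp w*ep w - pip) - Cvp*gp*rp w*(gm*rm w*em w - pim) = 0"
  proof -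
    fix w assume wD: "w \<in> D"
    have r: "rp w > 0" "rm w > 0" using pos[OF wD] by auto
    show "Cvm*gm*rm w*(gp*rp w*ep w - pip) - Cvp*gp*rp w*(gm*rm w*em w - pim) = 0"
      using T_cross[OF _ _ gas(3,4) r eos_T[OF wD, unfolded sg_temp_def]] gas by simp
  qed
  have cHT: "Cvm*gm*(Rm v * (gp*rp z*ep z - pip) + rm z*gp*(Rp v * ep z+rp z*Ep v))
             - Cvp*gp*(Rp v * (gm*rm z*em z - pim) + rp z*gm*(Rm v * em z+rm z*Em v)) = 0" for v
    by (rule const_deriv[OF _ D_open zD, of "\<lambda>w. Cvm*gm*rm w*(gp*rp w*ep w - pip) - Cvp*gp*rp w*(gm*rm w*em w - pim)" _ 0])
       (use Rp Ep Rm Em Tcross in \<open>auto intro!: derivative_eq_intros simp: algebra_simps\<close>)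
  have cHE: "(A v - Am v)*rp z*ep z + (1+(ap z - am z))*(Rp v * ep z + rp z*Ep v)
     + (Am v - A v)*rm z*em z + (1-(ap z-am z))*(Rm v * em z + rm z*Em v)
     - 2*((A v * rp z + ap z*Rp v + Am v * rm z + am z*Rm v)*e z + (ap z*rp z+am z*rm z)*E v) = 0" for v
    by (rule const_deriv[OF _ D_open zD, of "\<lambda>w. (1 + (ap w - am w))*rp w*ep w + (1 - (ap w - am w))*rm w*em w - 2*(ap w * rp w + am w * rm w)*e w" _ 0])
       (use A Am Rp Ep Rm Em E eos_energy in \<open>auto intro!: derivative_eq_intros simp: algebra_simps al_def rho_def\<close>)
  define dA where "dA = A dv"
  define dRp where "dRp = Rp dv"
  define dRm where "dRm = Rm dv"
  define dEp where "dEp = Ep dv"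
  define dEm where "dEm = Em dv"
  define dP where "dP = P dv"
  define dE where "dE = E dv"
  have dAm: "Am dv = -dA" using cAm[of dv] unfolding dA_def by simp
  have dmp: "((\<lambda>w. ap w * rp w) has_derivative (\<lambda>v. A v * rp z + ap z * Rp v)) (at z)"
    using A Rp by (auto intro!: derivative_eq_intros simp: algebra_simps)
  have dmm: "((\<lambda>w. am w * rm w) has_derivative (\<lambda>v. Am v * rm z + am z * Rm v)) (at z)"
    using Am Rm by (auto intro!: derivative_eq_intros simp: algebra_simps)
  have M1: "dA*rp z + ap z*dRp + ap z*rp z*th = 0"
  proof -
    have "pt (\<lambda>w. ap w * rp w) z + divg (\<lambda>w. (ap w * rp w) *\<^sub>R u w) z
       = (A (1,0) * rp z + ap z * Rp (1,0)) + (A (0,u z) * rp z + ap z * Rp (0, u z)) + ap z * rp z * th"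
      using cons_eq[OF dmp dmp U] unfolding th_def by simp
    moreover have "(A (1,0) * rp z + ap z * Rp (1,0)) + (A (0,u z) * rp z + ap z * Rp (0, u z)) = A dv * rp z + ap z * Rp dv"
      using lin_split[OF has_derivative_linear[OF dmp], of "u z"] unfolding dv_def by simp
    ultimately show ?thesis using mass_p[OF zD] unfolding dA_def dRp_def by simp
  qed
  have M2: "-dA*rm z + am z*dRm + am z*rm z*th = 0"
  proof -
    have "pt (\<lambda>w. am w * rm w) z + divg (\<lambda>w. (am w * rm w) *\<^sub>R u w) z
       = (Am (1,0) * rm z + am z * Rm (1,0)) + (Am (0,u z) * rm z + am z * Rm (0, u z)) + am z * rm z * th"
      using cons_eq[OF dmm dmm U] unfolding th_def by simp
    moreover have "(Am (1,0) * rm z + am z * Rm (1,0)) + (Am (0,u z) * rm z + am z * Rm (0, u z)) = Am dv * rm z + am z * Rm dv"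
      using lin_split[OF has_derivative_linear[OF dmm], of "u z"] unfolding dv_def by simp
    ultimately show ?thesis using mass_m[OF zD] dAm unfolding dRm_def by simp
  qed
  define Rd where "Rd = (\<lambda>v. A v * rp z + ap z * Rp v + (Am v * rm z + am z * Rm v))"
  have dr: "(rho has_derivative Rd) (at z)"
    unfolding rho_def Rd_def using A Am Rp Rm by (auto intro!: derivative_eq_intros simp: algebra_simps)
  have Rdv: "Rd dv = - rho z * th"
  proof -
    have "Rd dv = (dA*rp z + ap z*dRp + ap z*rp z*th) + (-dA*rm z + am z*dRm + am z*rm z*th) - (ap z*rp z + am z*rm z)*th"
      unfolding Rd_def dA_def dRp_def dRm_def using dAm[unfolded dA_def] by (simp add: algebra_simps)
    thus ?thesis using M1 M2 unfolding rho_def by (simp add: algebra_simps)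
  qed
  have mj: "rho z * (U dv $ j) + P (0, axis j 1) = rho z * (g $ j)" for j
  proof -
    have "Rd (1, u z) * (u z $ j) + rho z * th * (u z $ j) + rho z * (U (1, u z) $ j) + P (0, axis j 1) = rho z * (g $ j)"
      using momentum[OF zD, of j] mom_eq[OF dr U P, of j] unfolding th_def by simp
    thus ?thesis using Rdv unfolding dv_def by simp
  qed
  have uj: "((\<lambda>w. u w $ j) has_derivative (\<lambda>v. U v $ j)) (at z)" for j using vec_nth_deriv[OF U] .
  have G1: "pt (\<lambda>w. u w $ j) z + adv u (\<lambda>w. u w $ j) z + px j p z / rho z = g $ j" for j
  proof -
    have "pt (\<lambda>w. u w $ j) z + adv u (\<lambda>w. u w $ j) z = U dv $ j" using mat_eq[OF uj] unfolding dv_def by simp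
    moreover have "px j p z = P (0, axis j 1)" using px_eq[OF P] .
    moreover have "U dv $ j = g $ j - P (0, axis j 1) / rho z" using mj[of j] rhoz by (simp add: field_simps)
    ultimately show ?thesis by simp
  qed
  have dEE: "(EE has_derivative (\<lambda>v. E v + u z \<bullet> U v)) (at z)" unfolding EE_def using EE_deriv[OF E U] .
  define M1d where "M1d = (\<lambda>v. Rd v * EE z + rho z * (E v + u z \<bullet> U v))"
  have dm1: "((\<lambda>w. rho w * EE w) has_derivative M1d) (at z)"
    unfolding M1d_def using dr dEE by (auto intro!: derivative_eq_intros simp: algebra_simps)
  have dm2: "((\<lambda>w. rho w * EE w + p w) has_derivative (\<lambda>v. M1d v + P v)) (at z)"
    using dm1 P by (auto intro!: derivative_eq_intros)
  have ip: "rho z * (u z \<bullet> U dv) + P (0, u z) = rho z * (g \<bullet> u z)"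
  proof -
    have lP: "linear P" using has_derivative_linear[OF P] .
    have "rho z * (u z \<bullet> U dv) + P (0, u z) = rho z * (\<Sum>j\<in>UNIV. u z $ j * (U dv $ j)) + (\<Sum>j\<in>UNIV. u z $ j * P (0, axis j 1))"
      using lin_zero[OF lP, of "u z"] by (simp add: inner_vec_def)
    also have "\<dots> = (\<Sum>j\<in>UNIV. u z $ j * (rho z * (U dv $ j) + P (0, axis j 1)))"
      by (simp add: sum_distrib_left sum.distrib algebra_simps)
    also have "\<dots> = (\<Sum>j\<in>UNIV. u z $ j * (rho z * (g $ j)))" using mj by simp
    also have "\<dots> = rho z * (g \<bullet> u z)" by (simp add: inner_vec_def sum_distrib_left mult_ac)
    finally show ?thesis .
  qed
  have En: "rho z * dE + p z * th = 0"
  proof -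
    have "pt (\<lambda>w. rho w * EE w) z + divg (\<lambda>w. (rho w * EE w + p w) *\<^sub>R u w) z
      = M1d (1,0) + (M1d (0, u z) + P (0, u z)) + (rho z * EE z + p z) * th"
      using cons_eq[OF dm1 dm2 U] unfolding th_def by simp
    also have "\<dots> = M1d dv + P (0, u z) + (rho z * EE z + p z) * th"
      using lin_split[OF has_derivative_linear[OF dm1], of "u z"] unfolding dv_def by simp
    also have "\<dots> = rho z * dE + p z * th + (rho z * (u z \<bullet> U dv) + P (0, u z))"
      unfolding M1d_def Rdv dE_def by (simp add: algebra_simps)
    finally show ?thesis using energy[OF zD] ip by simp
  qed
  have Hp: "(gp-1)*rp z*ep z - pip = p z" using eos_p[OF zD] unfolding sg_pressure_def by simp
  have Hm: "(gm-1)*rm z*em z - pim = p z" using eos_p[OF zD] unfolding sg_pressure_def by simp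
  have Tpos: "(ep z - pip/(gp*rp z))/Cvp > 0" using T_pos[OF zD] unfolding sg_temp_def .
  have HT: "(ep z - pip/(gp*rp z))/Cvp = (em z - pim/(gm*rm z))/Cvm" using eos_T[OF zD] unfolding sg_temp_def .
  have HE: "(1+(ap z-am z))*rp z*ep z + (1-(ap z-am z))*rm z*em z = 2*(ap z*rp z+am z*rm z)*e z"
    using eos_energy[OF zD] unfolding al_def rho_def by simp
  have dHp: "(gp-1)*(dRp*ep z + rp z*dEp) = dP" using cHp[of dv] unfolding dRp_def dEp_def dP_def by simp
  have dHm: "(gm-1)*(dRm*em z + rm z*dEm) = dP" using cHm[of dv] unfolding dRm_def dEm_def dP_def by simp
  have dHT: "Cvm*gm*(dRm*(gp*rp z*ep z - pip) + rm z*gp*(dRp*ep z+rp z*dEp))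
             = Cvp*gp*(dRp*(gm*rm z*em z - pim) + rp z*gm*(dRm*em z+rm z*dEm))"
    using cHT[of dv] unfolding dRp_def dEp_def dRm_def dEm_def by simp
  have dHE: "2*dA*rp z*ep z + (1+(ap z-am z))*(dRp*ep z+rp z*dEp) - 2*dA*rm z*em z + (1-(ap z-am z))*(dRm*em z+rm z*dEm)
             = 2*((dA*rp z + ap z*dRp - dA*rm z + am z*dRm)*e z + (ap z*rp z+am z*rm z)*dE)"
    using cHE[of dv] dAm unfolding dA_def dRp_def dEp_def dRm_def dEm_def dE_def by (simp add: algebra_simps)
  have En': "(ap z*rp z+am z*rm z)*dE + p z*th = 0" using En unfolding rho_def by simp
  note AL = alg_main[OF gas fz pz Hp Hm Tpos HT HE dHp dHm dHT dHE M1 M2 En']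
  have G2: "pt p z + adv u p z
        + rho z * (mix_cs gp gm pip pim (al z) (rp z) (rm z) (p z))\<^sup>2 * divg u z = 0"
    using AL(1) mat_eq[OF P] divu unfolding dP_def dv_def rho_def al_def by simp
  have dal: "(al has_derivative (\<lambda>v. A v - Am v)) (at z)" unfolding al_def using A Am by (auto intro!: derivative_eq_intros)
  have G3: "pt al z + adv u al z
        + (1 - (al z)\<^sup>2) * mix_delta gp gm pip pim (al z) (rp z) (rm z) (p z) * divg u z = 0"
    using AL(2) mat_eq[OF dal] divu dAm unfolding dA_def dv_def al_def by simp
  define Tp where "Tp = sg_temp gp Cvp pip (rp z) (ep z)"
  have Tp_pos: "Tp > 0" unfolding Tp_def using T_pos[OF zD] .
  have Tm: "sg_temp gm Cvm pim (rm z) (em z) = Tp" unfolding Tp_def using eos_T[OF zD] by simp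
  define SPd where "SPd = (\<lambda>v. (Ep v - p z / (rp z)\<^sup>2 * Rp v) / Tp)"
  define SMd where "SMd = (\<lambda>v. (Em v - p z / (rm z)\<^sup>2 * Rm v) / Tp)"
  have dSp: "((\<lambda>w. Sp (rp w) (ep w)) has_derivative SPd) (at z)"
  proof -
    have pr: "((\<lambda>w. (rp w, ep w)) has_derivative (\<lambda>v. (Rp v, Ep v))) (at z)"
      using Rp Ep by (rule has_derivative_Pair)
    have e1: "((\<lambda>(a, b). Sp a b) has_derivative
          (\<lambda>(dr, de). (de - sg_pressure gp pip (rp z) (ep z) / (rp z)\<^sup>2 * dr) / sg_temp gp Cvp pip (rp z) (ep z))) (at (rp z, ep z))"
      using entp pz(1) T_pos[OF zD] unfolding is_entropy_def by blast
    have "((\<lambda>(a, b). Sp a b) \<circ> (\<lambda>w. (rp w, ep w)) has_derivative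
       (\<lambda>(dr, de). (de - sg_pressure gp pip (rp z) (ep z) / (rp z)\<^sup>2 * dr) / sg_temp gp Cvp pip (rp z) (ep z)) \<circ> (\<lambda>v. (Rp v, Ep v))) (at z)"
      by (rule diff_chain_at[OF pr]) (use e1 in simp)
    thus ?thesis unfolding SPd_def Tp_def using eos_p[OF zD] by (simp add: o_def)
  qed
  have dSm: "((\<lambda>w. Sm (rm w) (em w)) has_derivative SMd) (at z)"
  proof -
    have pr: "((\<lambda>w. (rm w, em w)) has_derivative (\<lambda>v. (Rm v, Em v))) (at z)"
      using Rm Em by (rule has_derivative_Pair)
    have e1: "((\<lambda>(a, b). Sm a b) has_derivative
          (\<lambda>(dr, de). (de - sg_pressure gm pim (rm z) (em z) / (rm z)\<^sup>2 * dr) / sg_temp gm Cvm pim (rm z) (em z))) (at (rm z, em z))"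
      using entm pz(2) T_pos[OF zD] eos_T[OF zD] unfolding is_entropy_def by auto
    have "((\<lambda>(a, b). Sm a b) \<circ> (\<lambda>w. (rm w, em w)) has_derivative
       (\<lambda>(dr, de). (de - sg_pressure gm pim (rm z) (em z) / (rm z)\<^sup>2 * dr) / sg_temp gm Cvm pim (rm z) (em z)) \<circ> (\<lambda>v. (Rm v, Em v))) (at z)"
      by (rule diff_chain_at[OF pr]) (use e1 in simp)
    thus ?thesis unfolding SMd_def Tm[symmetric] using eos_p[OF zD] by (simp add: o_def)
  qed
  have den0: "2*(ap z*rp z + am z*rm z) \<noteq> 0" using rho_pos[OF zD] by simp
  define Spz where "Spz = Sp (rp z) (ep z)"
  define Smz where "Smz = Sm (rm z) (em z)"
  define Nd where "Nd = (\<lambda>v. (A v - Am v) * rp z * Spz + (1 + (ap z - am z))*(Rp v * Spz + rp z * SPd v)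
       - (A v - Am v)*rm z*Smz + (1-(ap z-am z))*(Rm v * Smz + rm z * SMd v))"
  have dN: "((\<lambda>w. (1 + (ap w - am w)) * rp w * Sp (rp w) (ep w) + (1 - (ap w - am w)) * rm w * Sm (rm w) (em w)) has_derivative Nd) (at z)"
    using A Am Rp Rm dSp dSm by (auto intro!: derivative_eq_intros simp: Nd_def Spz_def Smz_def algebra_simps)
  have dden0: "((\<lambda>w. 2*rho w) has_derivative (\<lambda>v. 2*Rd v)) (at z)"
    using dr by (auto intro!: derivative_eq_intros)
  have dden: "((\<lambda>w. 2*(ap w*rp w + am w*rm w)) has_derivative (\<lambda>v. 2*Rd v)) (at z)"
    using dden0 unfolding rho_def by simp
  obtain S where S: "(s has_derivative S) (at z)"
    using has_derivative_divide'[OF dN dden den0] unfolding s_def by blast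
  have sN: "\<And>w. w \<in> D \<Longrightarrow> s w * (2*(ap w*rp w + am w*rm w))
      - ((1 + (ap w - am w)) * rp w * Sp (rp w) (ep w) + (1 - (ap w - am w)) * rm w * Sm (rm w) (em w)) = 0"
  proof -
    fix w assume "w \<in> D"
    hence "ap w*rp w + am w*rm w > 0" by (rule rho_pos)
    hence "2*(ap w*rp w + am w*rm w) \<noteq> 0" by simp
    thus "s w * (2*(ap w*rp w + am w*rm w))
      - ((1 + (ap w - am w)) * rp w * Sp (rp w) (ep w) + (1 - (ap w - am w)) * rm w * Sm (rm w) (em w)) = 0"
      unfolding s_def by simp
  qed
  have cS: "S v * (2*(ap z*rp z + am z*rm z)) + s z * (2*Rd v) - Nd v = 0" for v
    by (rule const_deriv[OF _ D_open zD sN])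
       (use S A Am Rp Rm dSp dSm in \<open>auto intro!: derivative_eq_intros simp: Nd_def Rd_def Spz_def Smz_def algebra_simps\<close>)
  have sz: "s z * (2*(ap z*rp z + am z*rm z)) = (1 + (ap z - am z)) * rp z * Spz + (1 - (ap z - am z)) * rm z * Smz"
    using sN[OF zD] unfolding Spz_def Smz_def by simp
  have Z: "ap z*rp z*SPd dv + am z*rm z*SMd dv = 0"
  proof -
    have "ap z*rp z*SPd dv + am z*rm z*SMd dv
      = (ap z*rp z*(dEp - p z/(rp z)\<^sup>2*dRp) + am z*rm z*(dEm - p z/(rm z)\<^sup>2*dRm)) / Tp"
      unfolding SPd_def SMd_def dEp_def dRp_def dEm_def dRm_def by (simp add: add_divide_distrib)
    thus ?thesis using AL(3) by simp
  qed
  have NZ: "Nd dv + ((1 + (ap z - am z)) * rp z * Spz + (1 - (ap z - am z)) * rm z * Smz) * th = 0"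
  proof -
    have am: "am z = 1 - ap z" using fz(3) by simp
    have "Nd dv + ((1 + (ap z - am z)) * rp z * Spz + (1 - (ap z - am z)) * rm z * Smz) * th
      = 2*(Spz*(dA*rp z + ap z*dRp + ap z*rp z*th) + Smz*(-dA*rm z + am z*dRm + am z*rm z*th)
          + (ap z*rp z*SPd dv + am z*rm z*SMd dv))"
      unfolding Nd_def dAm dA_def[symmetric] dRp_def[symmetric] dRm_def[symmetric] am by (simp add: algebra_simps)
    thus ?thesis using M1 M2 Z by simp
  qed
  have G4: "pt s z + adv u s z = 0"
  proof -
    have "S dv * (2*(ap z*rp z + am z*rm z)) = Nd dv - s z * (2*Rd dv)" using cS[of dv] by simp
    also have "\<dots> = Nd dv + (s z * (2*(ap z*rp z + am z*rm z))) * th" unfolding Rdv rho_def by (simp add: algebra_simps)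
    also have "\<dots> = 0" unfolding sz using NZ .
    finally have "S dv = 0" using den0 by simp
    thus ?thesis using mat_eq[OF S] unfolding dv_def by simp
  qed
  show "(\<forall>j. pt (\<lambda>w. u w $ j) z + adv u (\<lambda>w. u w $ j) z + px j p z / rho z = g $ j)
    \<and> pt p z + adv u p z
        + rho z * (mix_cs gp gm pip pim (al z) (rp z) (rm z) (p z))\<^sup>2 * divg u z = 0
    \<and> pt al z + adv u al z
        + (1 - (al z)\<^sup>2) * mix_delta gp gm pip pim (al z) (rp z) (rm z) (p z) * divg u z = 0
    \<and> pt s z + adv u s z = 0"
    using G1 G2 G3 G4 by blast
qed
end
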